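(* Let $G$ be a graph that does not contain $K_{2,3}$ as a minor. Then $G$ contains $K^4$ as a minor if and only if $G$ contains $K^4$ as a subgraph.
   Context: Graphs are simple. *)

theory Defs
  imports Main
begin

definition simple_graph :: "'a set \<Rightarrow> ('a \<Rightarrow> 'a \<Rightarrow> bool) \<Rightarrow> bool" where
  "simple_graph V E \<longleftrightarrow> finite V \<and> (\<forall>x y. E x y \<longrightarrow> x \<in> V \<and> y \<in> V)
     \<and> (\<forall>x y. E x y \<longrightarrow> E y x) \<and> (\<forall>x. \<not> E x x)"

text \<open>The subgraph induced on S is connected (S nonempty assumed separately).\<close>

definition connected_in :: "('a \<Rightarrow> 'a \<Rightarrow> bool) \<Rightarrow> 'a set \<Rightarrow> bool" where
  "connected_in E S \<longleftrightarrow>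
     (\<forall>x\<in>S. \<forall>y\<in>S. (\<lambda>u v. E u v \<and> u \<in> S \<and> v \<in> S)\<^sup>*\<^sup>* x y)"

definition is_minor :: "'b set \<Rightarrow> ('b \<Rightarrow> 'b \<Rightarrow> bool) \<Rightarrow> 'a set \<Rightarrow> ('a \<Rightarrow> 'a \<Rightarrow> bool) \<Rightarrow> bool" where
  "is_minor VH EH V E \<longleftrightarrow> (\<exists>B :: 'b \<Rightarrow> 'a set.
     (\<forall>h\<in>VH. B h \<noteq> {} \<and> B h \<subseteq> V \<and> connected_in E (B h))
     \<and> (\<forall>h\<in>VH. \<forall>h'\<in>VH. h \<noteq> h' \<longrightarrow> B h \<inter> B h' = {})
     \<and> (\<forall>h\<in>VH. \<forall>h'\<in>VH. EH h h' \<longrightarrow> (\<exists>x\<in>B h. \<exists>y\<in>B h'. E x y)))"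

definition is_subgraph :: "'b set \<Rightarrow> ('b \<Rightarrow> 'b \<Rightarrow> bool) \<Rightarrow> 'a set \<Rightarrow> ('a \<Rightarrow> 'a \<Rightarrow> bool) \<Rightarrow> bool" where
  "is_subgraph VH EH V E \<longleftrightarrow> (\<exists>f :: 'b \<Rightarrow> 'a.
     inj_on f VH \<and> f ` VH \<subseteq> V \<and> (\<forall>h\<in>VH. \<forall>h'\<in>VH. EH h h' \<longrightarrow> E (f h) (f h')))"

definition K4_V :: "nat set" where "K4_V = {0..<4}"
definition K4_E :: "nat \<Rightarrow> nat \<Rightarrow> bool" where
  "K4_E x y \<longleftrightarrow> x \<in> K4_V \<and> y \<in> K4_V \<and> x \<noteq> y"

definition K23_V :: "nat set" where "K23_V = {0..<5}"
definition K23_E :: "nat \<Rightarrow> nat \<Rightarrow> bool" where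
  "K23_E x y \<longleftrightarrow> x \<in> K23_V \<and> y \<in> K23_V \<and> ((x < 2 \<and> 2 \<le> y) \<or> (y < 2 \<and> 2 \<le> x))"

end

theory Submission
  imports Defs
begin

lemma boundary:
  assumes "(\<lambda>u v. E u v \<and> u \<in> S \<and> v \<in> S)\<^sup>*\<^sup>* x z" "x \<in> A" "z \<notin> A"
  shows "\<exists>u v. E u v \<and> u \<in> S \<and> v \<in> S \<and> u \<in> A \<and> v \<notin> A"
  using assms by (induction rule: rtranclp_induct) auto

lemma lift_path:
  assumes "(\<lambda>u v. E u v \<and> u \<in> S \<and> v \<in> S)\<^sup>*\<^sup>* x y" "S \<subseteq> T"
  shows "(\<lambda>u v. E u v \<and> u \<in> T \<and> v \<in> T)\<^sup>*\<^sup>* x y"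
  using assms by (induction rule: rtranclp_induct) (auto intro: rtranclp.rtrancl_into_rtrancl)

lemma rt_sym:
  assumes sym: "\<forall>x y. E x y \<longrightarrow> E y x"
    and "(\<lambda>u v. E u v \<and> u \<in> S \<and> v \<in> S)\<^sup>*\<^sup>* x y"
  shows "(\<lambda>u v. E u v \<and> u \<in> S \<and> v \<in> S)\<^sup>*\<^sup>* y x"
  using assms(2)
proof (induction rule: rtranclp_induct)
  case base
  then show ?case by simp
next
  case (step y z)
  then show ?case using sym
    by (auto intro: converse_rtranclp_into_rtranclp[of "\<lambda>u v. E u v \<and> u \<in> S \<and> v \<in> S" z y x])
qed

lemma conn_single: "connected_in E {x}"
  unfolding connected_in_def by auto

lemma conn_union:
  assumes sym: "\<forall>x y. E x y \<longrightarrow> E y x"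
    and cA: "connected_in E A" and cB: "connected_in E B"
    and a: "a \<in> A" and b: "b \<in> B" and ab: "E a b"
  shows "connected_in E (A \<union> B)"
  unfolding connected_in_def
proof (intro ballI)
  fix x y assume x: "x \<in> A \<union> B" and y: "y \<in> A \<union> B"
  let ?R = "\<lambda>u v. E u v \<and> u \<in> A \<union> B \<and> v \<in> A \<union> B"
  have inA: "?R\<^sup>*\<^sup>* p q" if "p \<in> A" "q \<in> A" for p q
    using lift_path[of E A p q "A \<union> B"] cA that unfolding connected_in_def by auto
  have inB: "?R\<^sup>*\<^sup>* p q" if "p \<in> B" "q \<in> B" for p q
    using lift_path[of E B p q "A \<union> B"] cB that unfolding connected_in_def by auto
  have e1: "?R a b" using a b ab by auto
  have e2: "?R b a" using a b ab sym by auto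
  show "?R\<^sup>*\<^sup>* x y"
  proof (cases "x \<in> A")
    case True
    show ?thesis
    proof (cases "y \<in> A")
      case True with \<open>x \<in> A\<close> show ?thesis by (rule inA)
    next
      case False
      then have "y \<in> B" using y by auto
      have "?R\<^sup>*\<^sup>* x a" using inA[OF \<open>x \<in> A\<close> a] .
      moreover have "?R\<^sup>*\<^sup>* b y" using inB[OF b \<open>y \<in> B\<close>] .
      ultimately show ?thesis
        using rtranclp_trans[OF rtranclp.rtrancl_into_rtrancl[of ?R x a b]] e1 by blast
    qed
  next
    case False
    then have xB: "x \<in> B" using x by auto
    show ?thesis
    proof (cases "y \<in> B")
      case True with xB show ?thesis by (rule inB)
    next
      case False
      then have "y \<in> A" using y by auto
      have "?R\<^sup>*\<^sup>* x b" using inB[OF xB b] .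
      moreover have "?R\<^sup>*\<^sup>* a y" using inA[OF a \<open>y \<in> A\<close>] .
      ultimately show ?thesis
        using rtranclp_trans[OF rtranclp.rtrancl_into_rtrancl[of ?R x b a]] e2 by blast
    qed
  qed
qed

lemma split_conn:
  assumes sym: "\<forall>x y. E x y \<longrightarrow> E y x" and fin: "finite S"
    and cS: "connected_in E S" and c2: "card S \<ge> 2"
  shows "\<exists>X Y. X \<noteq> {} \<and> Y \<noteq> {} \<and> X \<inter> Y = {} \<and> X \<union> Y = S \<and> connected_in E X
            \<and> connected_in E Y \<and> (\<exists>x\<in>X. \<exists>y\<in>Y. E x y)"
proof -
  define P where "P = (\<lambda>Y. Y \<subseteq> S \<and> Y \<noteq> S \<and> Y \<noteq> {} \<and> connected_in E Y)"
  have "S \<noteq> {}" using c2 by auto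
  then obtain s where s: "s \<in> S" by auto
  have "{s} \<noteq> S" using c2 by auto
  moreover have "connected_in E {s}" by (rule conn_single)
  ultimately have Ps: "P {s}" unfolding P_def using s by auto
  have bound: "\<forall>Y. P Y \<longrightarrow> card Y < Suc (card S)"
    unfolding P_def using fin by (auto simp: card_mono le_imp_less_Suc)
  obtain Y where PY: "P Y" and maxY: "\<forall>Z. P Z \<longrightarrow> card Z \<le> card Y"
    using ex_has_greatest_nat[of P "{s}" card "Suc (card S)", OF Ps bound] by blast
  have YS: "Y \<subseteq> S" and YneS: "Y \<noteq> S" and Yne: "Y \<noteq> {}" and cY: "connected_in E Y"
    using PY unfolding P_def by auto
  define X where "X = S - Y"
  have Xne: "X \<noteq> {}" using YS YneS unfolding X_def by auto
  then obtain x1 where x1: "x1 \<in> X" by auto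
  obtain y0 where y0: "y0 \<in> Y" using Yne by auto
  define RX where "RX = (\<lambda>u v. E u v \<and> u \<in> X \<and> v \<in> X)"
  define C where "C = {x \<in> X. RX\<^sup>*\<^sup>* x1 x}"
  have x1C: "x1 \<in> C" unfolding C_def using x1 by auto
  have CX: "C \<subseteq> X" unfolding C_def by auto
  have pathC: "(\<lambda>u v. E u v \<and> u \<in> C \<and> v \<in> C)\<^sup>*\<^sup>* x1 x" if "RX\<^sup>*\<^sup>* x1 x" for x
    using that
  proof (induction rule: rtranclp_induct)
    case base then show ?case by simp
  next
    case (step y z)
    have "y \<in> C" using step(1,2) unfolding C_def RX_def by auto
    moreover have "z \<in> C" using step(1,2) rtranclp.rtrancl_into_rtrancl[OF step(1,2)]
      unfolding C_def RX_def by auto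
    ultimately show ?case using step(2,3) unfolding RX_def
      by (auto intro: rtranclp.rtrancl_into_rtrancl)
  qed
  have cC: "connected_in E C"
    unfolding connected_in_def
  proof (intro ballI)
    fix x y assume "x \<in> C" "y \<in> C"
    then have "RX\<^sup>*\<^sup>* x1 x" "RX\<^sup>*\<^sup>* x1 y" unfolding C_def by auto
    then have p1: "(\<lambda>u v. E u v \<and> u \<in> C \<and> v \<in> C)\<^sup>*\<^sup>* x1 x"
      and p2: "(\<lambda>u v. E u v \<and> u \<in> C \<and> v \<in> C)\<^sup>*\<^sup>* x1 y" using pathC by auto
    have "(\<lambda>u v. E u v \<and> u \<in> C \<and> v \<in> C)\<^sup>*\<^sup>* x x1" using rt_sym[OF sym p1] .
    then show "(\<lambda>u v. E u v \<and> u \<in> C \<and> v \<in> C)\<^sup>*\<^sup>* x y" using p2 by (rule rtranclp_trans)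
  qed
  have x1S: "x1 \<in> S" using x1 unfolding X_def by auto
  have y0S: "y0 \<in> S" using y0 YS by auto
  have y0C: "y0 \<notin> C" using CX y0 unfolding X_def by auto
  have pth: "(\<lambda>u v. E u v \<and> u \<in> S \<and> v \<in> S)\<^sup>*\<^sup>* p q" if "p \<in> S" "q \<in> S" for p q
    using cS that unfolding connected_in_def by blast
  obtain u v where uv: "E u v" "u \<in> S" "v \<in> S" "u \<in> C" "v \<notin> C"
    using boundary[OF pth[OF x1S y0S] x1C y0C] by blast
  have vY: "v \<in> Y"
  proof (rule ccontr)
    assume "v \<notin> Y"
    then have vX: "v \<in> X" using uv unfolding X_def by auto
    have "RX\<^sup>*\<^sup>* x1 u" using uv unfolding C_def by auto
    moreover have "RX u v" using uv vX CX unfolding RX_def by auto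
    ultimately have "RX\<^sup>*\<^sup>* x1 v" by (rule rtranclp.rtrancl_into_rtrancl)
    then have "v \<in> C" using vX unfolding C_def by auto
    then show False using uv by auto
  qed
  have cYC: "connected_in E (Y \<union> C)"
    using conn_union[OF sym cY cC vY uv(4)] sym uv(1) by auto
  have "card Y < card (Y \<union> C)"
  proof (rule psubset_card_mono)
    show "finite (Y \<union> C)" using fin YS CX unfolding X_def by (auto intro: finite_subset)
    show "Y \<subset> Y \<union> C" using x1C x1 unfolding X_def by auto
  qed
  then have "\<not> P (Y \<union> C)" using maxY by (meson not_le)
  then have YC: "Y \<union> C = S" unfolding P_def using YS CX cYC Yne unfolding X_def by auto
  have CeqX: "C = X" using YC CX unfolding X_def by auto
  obtain u' v' where uv': "E u' v'" "u' \<in> S" "v' \<in> S" "u' \<in> Y" "v' \<notin> Y"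
    using boundary[OF pth[OF y0S x1S] y0] x1 unfolding X_def by blast
  have "v' \<in> X" using uv' unfolding X_def by auto
  moreover have "E v' u'" using uv' sym by auto
  ultimately have eXY: "\<exists>x\<in>X. \<exists>y\<in>Y. E x y" using uv' by auto
  have dXY: "X \<inter> Y = {}" "X \<union> Y = S" using YS unfolding X_def by auto
  have cX: "connected_in E X" using cC CeqX by simp
  show ?thesis
    by (rule exI[of _ X], rule exI[of _ Y]) (intro conjI Xne Yne dXY cX cY eXY)
qed

lemma K23_build:
  assumes sym: "\<forall>x y. E x y \<longrightarrow> E y x"
  and ne: "H1 \<noteq> {}" "H2 \<noteq> {}" "L1 \<noteq> {}" "L2 \<noteq> {}" "L3 \<noteq> {}"
  and sub: "H1 \<subseteq> V" "H2 \<subseteq> V" "L1 \<subseteq> V" "L2 \<subseteq> V" "L3 \<subseteq> V"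
  and con: "connected_in E H1" "connected_in E H2" "connected_in E L1" "connected_in E L2"
    "connected_in E L3"
  and dis: "H1 \<inter> H2 = {}" "H1 \<inter> L1 = {}" "H1 \<inter> L2 = {}" "H1 \<inter> L3 = {}"
    "H2 \<inter> L1 = {}" "H2 \<inter> L2 = {}" "H2 \<inter> L3 = {}" "L1 \<inter> L2 = {}" "L1 \<inter> L3 = {}"
    "L2 \<inter> L3 = {}"
  and adj: "\<exists>x\<in>H1. \<exists>y\<in>L1. E x y" "\<exists>x\<in>H1. \<exists>y\<in>L2. E x y" "\<exists>x\<in>H1. \<exists>y\<in>L3. E x y"
    "\<exists>x\<in>H2. \<exists>y\<in>L1. E x y" "\<exists>x\<in>H2. \<exists>y\<in>L2. E x y" "\<exists>x\<in>H2. \<exists>y\<in>L3. E x y"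
  shows "is_minor K23_V K23_E V E"
proof -
  define B where "B = (\<lambda>n::nat. if n = 0 then H1 else if n = 1 then H2 else if n = 2 then L1
     else if n = 3 then L2 else L3)"
  have V5: "K23_V = {0,1,2,3,4}" by (auto simp: K23_V_def)
  have adj': "\<exists>x\<in>L1. \<exists>y\<in>H1. E x y" "\<exists>x\<in>L2. \<exists>y\<in>H1. E x y" "\<exists>x\<in>L3. \<exists>y\<in>H1. E x y"
    "\<exists>x\<in>L1. \<exists>y\<in>H2. E x y" "\<exists>x\<in>L2. \<exists>y\<in>H2. E x y" "\<exists>x\<in>L3. \<exists>y\<in>H2. E x y"
    using adj sym by blast+
  have dis': "H2 \<inter> H1 = {}" "L1 \<inter> H1 = {}" "L2 \<inter> H1 = {}" "L3 \<inter> H1 = {}"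
    "L1 \<inter> H2 = {}" "L2 \<inter> H2 = {}" "L3 \<inter> H2 = {}" "L2 \<inter> L1 = {}" "L3 \<inter> L1 = {}"
    "L3 \<inter> L2 = {}" using dis by auto
  have h5: "h = 0 \<or> h = 1 \<or> h = 2 \<or> h = 3 \<or> h = 4" if "h \<in> K23_V" for h
    using that unfolding V5 by simp
  have c1: "B h \<noteq> {} \<and> B h \<subseteq> V \<and> connected_in E (B h)" if "h \<in> K23_V" for h
    using h5[OF that] ne sub con by (elim disjE) (simp_all add: B_def)
  have c2: "B h \<inter> B h' = {}" if "h \<in> K23_V" "h' \<in> K23_V" "h \<noteq> h'" for h h'
    using h5[OF that(1)] h5[OF that(2)] that(3)
    by (elim disjE) (simp_all add: B_def dis dis')
  have c3: "\<exists>x\<in>B h. \<exists>y\<in>B h'. E x y" if "h \<in> K23_V" "h' \<in> K23_V" "K23_E h h'" for h h'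
    using h5[OF that(1)] h5[OF that(2)] that(3)
    by (elim disjE) (simp_all add: B_def adj adj' K23_E_def)
  show ?thesis unfolding is_minor_def
  proof (intro exI[of _ B] conjI ballI impI)
    fix h assume "h \<in> K23_V"
    then show "B h \<noteq> {}" "B h \<subseteq> V" "connected_in E (B h)" using c1 by auto
  next
    fix h h' assume "h \<in> K23_V" "h' \<in> K23_V" "h \<noteq> h'"
    then show "B h \<inter> B h' = {}" by (rule c2)
  next
    fix h h' assume "h \<in> K23_V" "h' \<in> K23_V" "K23_E h h'"
    then show "\<exists>x\<in>B h. \<exists>y\<in>B h'. E x y" by (rule c3)
  qed
qed

lemma K4_minor_min:
  fixes V :: "'a set" and E :: "'a \<Rightarrow> 'a \<Rightarrow> bool"
  assumes sg: "simple_graph V E"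
    and noK23: "\<not> is_minor K23_V K23_E V E"
    and mn: "is_minor K4_V K4_E V E"
  shows "is_subgraph K4_V K4_E V E"
proof -
  have sym: "\<forall>x y. E x y \<longrightarrow> E y x" and finV: "finite V"
    using sg unfolding simple_graph_def by auto
  define M where "M = (\<lambda>B::nat \<Rightarrow> 'a set.
     (\<forall>h\<in>K4_V. B h \<noteq> {} \<and> B h \<subseteq> V \<and> connected_in E (B h))
     \<and> (\<forall>h\<in>K4_V. \<forall>h'\<in>K4_V. h \<noteq> h' \<longrightarrow> B h \<inter> B h' = {})
     \<and> (\<forall>h\<in>K4_V. \<forall>h'\<in>K4_V. K4_E h h' \<longrightarrow> (\<exists>x\<in>B h. \<exists>y\<in>B h'. E x y)))"
  obtain B0 where "M B0" using mn unfolding is_minor_def M_def by blast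
  then obtain B where MB: "M B" and minB: "\<forall>B'. M B' \<longrightarrow> (\<Sum>h\<in>K4_V. card (B h)) \<le> (\<Sum>h\<in>K4_V. card (B' h))"
    using ex_has_least_nat[of M B0 "\<lambda>B. \<Sum>h\<in>K4_V. card (B h)", OF \<open>M B0\<close>] by (elim exE conjE) simp
  have MB': "(\<forall>h\<in>K4_V. B h \<noteq> {} \<and> B h \<subseteq> V \<and> connected_in E (B h))"
     "(\<forall>h\<in>K4_V. \<forall>h'\<in>K4_V. h \<noteq> h' \<longrightarrow> B h \<inter> B h' = {})"
     "(\<forall>h\<in>K4_V. \<forall>h'\<in>K4_V. K4_E h h' \<longrightarrow> (\<exists>x\<in>B h. \<exists>y\<in>B h'. E x y))"
    using MB unfolding M_def by simp_all
  have Bne: "\<And>h. h \<in> K4_V \<Longrightarrow> B h \<noteq> {}" and BV: "\<And>h. h \<in> K4_V \<Longrightarrow> B h \<subseteq> V"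
    and Bc: "\<And>h. h \<in> K4_V \<Longrightarrow> connected_in E (B h)"
    using MB'(1) by simp_all
  have Bd: "\<And>h h'. h \<in> K4_V \<Longrightarrow> h' \<in> K4_V \<Longrightarrow> h \<noteq> h' \<Longrightarrow> B h \<inter> B h' = {}"
    using MB'(2) by simp
  have Be: "\<And>h h'. h \<in> K4_V \<Longrightarrow> h' \<in> K4_V \<Longrightarrow> h \<noteq> h' \<Longrightarrow> \<exists>x\<in>B h. \<exists>y\<in>B h'. E x y"
  proof -
    fix h h' assume "h \<in> K4_V" "h' \<in> K4_V" "h \<noteq> h'"
    moreover then have "K4_E h h'" unfolding K4_E_def by simp
    ultimately show "\<exists>x\<in>B h. \<exists>y\<in>B h'. E x y" using MB'(3) by simp
  qed
  have finK: "finite K4_V" by (simp add: K4_V_def)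
  have one: "card (B h0) = 1" if h0: "h0 \<in> K4_V" for h0
  proof (rule ccontr)
    assume c1: "card (B h0) \<noteq> 1"
    have finB: "finite (B h0)" using BV[OF h0] finV by (rule finite_subset)
    have "card (B h0) \<noteq> 0" using finB Bne[OF h0] by simp
    then have c2: "card (B h0) \<ge> 2" using c1 by linarith
    obtain X Y where XY: "X \<noteq> {}" "Y \<noteq> {}" "X \<inter> Y = {}" "X \<union> Y = B h0"
      "connected_in E X" "connected_in E Y" "\<exists>x\<in>X. \<exists>y\<in>Y. E x y"
      using split_conn[OF sym finB Bc[OF h0] c2] by blast
    define adj where "adj = (\<lambda>A C. \<exists>x\<in>A. \<exists>y\<in>C. E x y)"
    have noall: "\<not> (\<forall>h\<in>K4_V. h \<noteq> h0 \<longrightarrow> adj Z (B h))"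
      if Zne: "Z \<noteq> {}" and Zsub: "Z \<subset> B h0" and Zc: "connected_in E Z" for Z
    proof
      assume all: "\<forall>h\<in>K4_V. h \<noteq> h0 \<longrightarrow> adj Z (B h)"
      define B' where "B' = B(h0 := Z)"
      have B'0: "B' h0 = Z" unfolding B'_def by simp
      have B'1: "B' h = B h" if "h \<noteq> h0" for h unfolding B'_def using that by simp
      have ZV: "Z \<subseteq> V" using Zsub BV[OF h0] by blast
      have "M B'"
        unfolding M_def
      proof (intro conjI ballI impI)
        fix h assume hK: "h \<in> K4_V"
        have "B' h \<noteq> {} \<and> B' h \<subseteq> V \<and> connected_in E (B' h)"
        proof (cases "h = h0")
          case True
          then have "B' h = Z" using B'0 by simp
          then show ?thesis using Zne ZV Zc by simp
        next
          case False
          then have "B' h = B h" by (rule B'1)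
          then show ?thesis using Bne[OF hK] BV[OF hK] Bc[OF hK] by simp
        qed
        then show "B' h \<noteq> {}" "B' h \<subseteq> V" "connected_in E (B' h)" by simp_all
      next
        fix h h' assume hh: "h \<in> K4_V" "h' \<in> K4_V" "h \<noteq> h'"
        show "B' h \<inter> B' h' = {}"
        proof (cases "h = h0")
          case True
          then have "h' \<noteq> h0" using hh by simp
          then have "B h0 \<inter> B h' = {}" using Bd[OF h0 hh(2)] by simp
          moreover have "B' h = Z" "B' h' = B h'" using True B'0 B'1[OF \<open>h' \<noteq> h0\<close>] by simp_all
          ultimately show ?thesis using Zsub by auto
        next
          case False
          show ?thesis
          proof (cases "h' = h0")
            case True
            then have "B h \<inter> B h0 = {}" using Bd[OF hh(1) h0] False by simp
            moreover have "B' h' = Z" "B' h = B h" using True B'0 B'1[OF False] by simp_all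
            ultimately show ?thesis using Zsub by auto
          next
            case False2: False
            then show ?thesis using Bd[OF hh] B'1[OF False] B'1[OF False2] by simp
          qed
        qed
      next
        fix h h' assume hh: "h \<in> K4_V" "h' \<in> K4_V" "K4_E h h'"
        then have hne: "h \<noteq> h'" unfolding K4_E_def by simp
        show "\<exists>x\<in>B' h. \<exists>y\<in>B' h'. E x y"
        proof (cases "h = h0")
          case True
          then have "h' \<noteq> h0" using hne by simp
          then have "adj Z (B h')" using all hh(2) by simp
          moreover have "B' h = Z" "B' h' = B h'" using True B'0 B'1[OF \<open>h' \<noteq> h0\<close>] by simp_all
          ultimately show ?thesis unfolding adj_def by simp
        next
          case False
          show ?thesis
          proof (cases "h' = h0")
            case True
            then have "adj Z (B h)" using all hh(1) False by simp
            then have "\<exists>x\<in>B h. \<exists>y\<in>Z. E x y" using sym unfolding adj_def by blast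
            moreover have "B' h' = Z" "B' h = B h" using True B'0 B'1[OF False] by simp_all
            ultimately show ?thesis by simp
          next
            case False2: False
            then show ?thesis using Be[OF hh(1,2) hne] B'1[OF False] B'1[OF False2] by simp
          qed
        qed
      qed
      then have le: "(\<Sum>h\<in>K4_V. card (B h)) \<le> (\<Sum>h\<in>K4_V. card (B' h))" using minB by blast
      have s1: "(\<Sum>h\<in>K4_V. card (B h)) = card (B h0) + (\<Sum>h\<in>K4_V - {h0}. card (B h))"
        using sum.remove[OF finK h0] .
      have s2: "(\<Sum>h\<in>K4_V. card (B' h)) = card (B' h0) + (\<Sum>h\<in>K4_V - {h0}. card (B' h))"
        using sum.remove[OF finK h0] .
      have s3: "(\<Sum>h\<in>K4_V - {h0}. card (B' h)) = (\<Sum>h\<in>K4_V - {h0}. card (B h))"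
        by (rule sum.cong) (simp_all add: B'1)
      have "card Z < card (B h0)" using psubset_card_mono[OF finB Zsub] .
      then show False using le s1 s2 s3 B'0 by simp
    qed
    have XB: "X \<subset> B h0" using XY by auto
    have YB: "Y \<subset> B h0" using XY by auto
    have cover: "adj X (B h) \<or> adj Y (B h)" if "h \<in> K4_V" "h \<noteq> h0" for h
      using Be[OF h0 that(1) that(2)[symmetric]] XY(4) unfolding adj_def by auto
    obtain i where i: "i \<in> K4_V" "i \<noteq> h0" "\<not> adj X (B i)"
      using noall[OF XY(1) XB XY(5)] by blast
    obtain j where j: "j \<in> K4_V" "j \<noteq> h0" "\<not> adj Y (B j)"
      using noall[OF XY(2) YB XY(6)] by blast
    have Yi: "adj Y (B i)" using cover[OF i(1,2)] i(3) by auto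
    have Xj: "adj X (B j)" using cover[OF j(1,2)] j(3) by auto
    have ij: "i \<noteq> j" using i j Yi by auto
    have "\<not> K4_V \<subseteq> {h0, i, j}"
    proof
      assume "K4_V \<subseteq> {h0, i, j}"
      then have "card K4_V \<le> card {h0, i, j}" by (rule card_mono[rotated]) simp
      moreover have "card {h0, i, j} \<le> 3" by (simp add: card_insert_if)
      moreover have "card K4_V = 4" by (simp add: K4_V_def)
      ultimately show False by linarith
    qed
    then obtain k where k: "k \<in> K4_V" "k \<noteq> h0" "k \<noteq> i" "k \<noteq> j" by blast
    have XYsub: "X \<subseteq> B h0" "Y \<subseteq> B h0" using XY by auto
    have d0i: "B h0 \<inter> B i = {}" using Bd[OF h0 i(1)] i(2) by auto
    have d0j: "B h0 \<inter> B j = {}" using Bd[OF h0 j(1)] j(2) by auto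
    have d0k: "B h0 \<inter> B k = {}" using Bd[OF h0 k(1)] k(2) by auto
    have dij: "B i \<inter> B j = {}" using Bd[OF i(1) j(1)] ij by auto
    have dik: "B i \<inter> B k = {}" using Bd[OF i(1) k(1)] k(3) by auto
    have djk: "B j \<inter> B k = {}" using Bd[OF j(1) k(1)] k(4) by auto
    have eji: "\<exists>x\<in>B j. \<exists>y\<in>B i. E x y" using Be[OF j(1) i(1)] ij by auto
    have ejk: "\<exists>x\<in>B j. \<exists>y\<in>B k. E x y" using Be[OF j(1) k(1)] k(4) by auto
    have eij: "\<exists>x\<in>B i. \<exists>y\<in>B j. E x y" using Be[OF i(1) j(1)] ij by auto
    have eik: "\<exists>x\<in>B i. \<exists>y\<in>B k. E x y" using Be[OF i(1) k(1)] k(3) by auto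
    have XYe: "\<exists>x\<in>Y. \<exists>y\<in>X. E x y" using XY(7) sym by blast
    have Xj': "\<exists>x\<in>B j. \<exists>y\<in>X. E x y" using Xj sym unfolding adj_def by blast
    have Yi': "\<exists>x\<in>B i. \<exists>y\<in>Y. E x y" using Yi sym unfolding adj_def by blast
    have VX: "X \<subseteq> V" "Y \<subseteq> V" using XYsub BV[OF h0] by auto
    have dd: "X \<inter> B i = {}" "X \<inter> B j = {}" "X \<inter> B k = {}" "Y \<inter> B i = {}"
      "Y \<inter> B j = {}" "Y \<inter> B k = {}" "B i \<inter> Y = {}" "B j \<inter> X = {}" "B j \<inter> B i = {}"
      "Y \<inter> X = {}"
      using XYsub d0i d0j d0k dij XY(3) by blast+
    have Yi0: "\<exists>x\<in>Y. \<exists>y\<in>B i. E x y" using Yi unfolding adj_def .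
    have Xj0: "\<exists>x\<in>X. \<exists>y\<in>B j. E x y" using Xj unfolding adj_def .
    show False
    proof (cases "adj Y (B k)")
      case True
      then have Yk0: "\<exists>x\<in>Y. \<exists>y\<in>B k. E x y" unfolding adj_def .
      have "is_minor K23_V K23_E V E"
        by (rule K23_build[OF sym XY(2) Bne[OF j(1)] XY(1) Bne[OF i(1)] Bne[OF k(1)]
          VX(2) BV[OF j(1)] VX(1) BV[OF i(1)] BV[OF k(1)]
          XY(6) Bc[OF j(1)] XY(5) Bc[OF i(1)] Bc[OF k(1)]
          dd(5) dd(10) dd(4) dd(6) dd(8) dd(9) djk dd(1) dd(3) dik
          XYe Yi0 Yk0 Xj' eji ejk])
      then show False using noK23 by simp
    next
      case False
      then have Xk: "adj X (B k)" using cover[OF k(1,2)] by auto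
      then have Xk0: "\<exists>x\<in>X. \<exists>y\<in>B k. E x y" unfolding adj_def .
      have "is_minor K23_V K23_E V E"
        by (rule K23_build[OF sym XY(1) Bne[OF i(1)] XY(2) Bne[OF j(1)] Bne[OF k(1)]
          VX(1) BV[OF i(1)] VX(2) BV[OF j(1)] BV[OF k(1)]
          XY(5) Bc[OF i(1)] XY(6) Bc[OF j(1)] Bc[OF k(1)]
          dd(1) XY(3) dd(2) dd(3) dd(7) dij dik dd(5) dd(6) djk
          XY(7) Xj0 Xk0 Yi' eij eik])
      then show False using noK23 by simp
    qed
  qed
  define f where "f = (\<lambda>h. the_elem (B h))"
  have Bf: "B h = {f h}" if hK: "h \<in> K4_V" for h
  proof -
    obtain x where x: "B h = {x}" using one[OF hK] by (rule card_1_singletonE)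
    then have "f h = x" unfolding f_def by simp
    then show ?thesis using x by simp
  qed
  have fB: "f h \<in> B h" if hK: "h \<in> K4_V" for h
  proof -
    have "B h = {f h}" by (rule Bf[OF hK])
    then show ?thesis by (simp only: singleton_iff)
  qed
  show ?thesis
    unfolding is_subgraph_def
  proof (intro exI[of _ f] conjI)
    show "inj_on f K4_V"
    proof (rule inj_onI)
      fix h h' assume hh: "h \<in> K4_V" "h' \<in> K4_V" "f h = f h'"
      show "h = h'"
      proof (rule ccontr)
        assume "h \<noteq> h'"
        then have "B h \<inter> B h' = {}" using Bd hh by blast
        moreover have "f h \<in> B h" "f h \<in> B h'" using fB[OF hh(1)] fB[OF hh(2)] hh(3) by simp_all
        ultimately show False by blast
      qed
    qed
    show "f ` K4_V \<subseteq> V"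
    proof
      fix x assume "x \<in> f ` K4_V"
      then obtain h where h: "h \<in> K4_V" "x = f h" by blast
      then show "x \<in> V" using BV[OF h(1)] fB[OF h(1)] by blast
    qed
    show "\<forall>h\<in>K4_V. \<forall>h'\<in>K4_V. K4_E h h' \<longrightarrow> E (f h) (f h')"
    proof (intro ballI impI)
      fix h h' assume hh: "h \<in> K4_V" "h' \<in> K4_V" "K4_E h h'"
      then have "h \<noteq> h'" unfolding K4_E_def by simp
      then obtain x y where "x \<in> B h" "y \<in> B h'" "E x y" using Be hh by blast
      then show "E (f h) (f h')" using Bf[OF hh(1)] Bf[OF hh(2)] by simp
    qed
  qed
qed

theorem lemma4p1:
  fixes V :: "'a set" and E :: "'a \<Rightarrow> 'a \<Rightarrow> bool"
  assumes "simple_graph V E"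
    and "\<not> is_minor K23_V K23_E V E"
  shows "is_minor K4_V K4_E V E \<longleftrightarrow> is_subgraph K4_V K4_E V E"
proof
  assume "is_minor K4_V K4_E V E"
  then show "is_subgraph K4_V K4_E V E" by (rule K4_minor_min[OF assms])
next
  assume "is_subgraph K4_V K4_E V E"
  then obtain f where f: "inj_on f K4_V" "f ` K4_V \<subseteq> V"
    "\<forall>h\<in>K4_V. \<forall>h'\<in>K4_V. K4_E h h' \<longrightarrow> E (f h) (f h')"
    unfolding is_subgraph_def by blast
  show "is_minor K4_V K4_E V E"
    unfolding is_minor_def
  proof (intro exI[of _ "\<lambda>h. {f h}"] conjI ballI impI)
    fix h assume "h \<in> K4_V"
    then show "{f h} \<noteq> {}" "{f h} \<subseteq> V" "connected_in E {f h}" using f conn_single by auto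
  next
    fix h h' assume "h \<in> K4_V" "h' \<in> K4_V" "h \<noteq> h'"
    then show "{f h} \<inter> {f h'} = {}" using f(1) by (auto dest: inj_onD)
  next
    fix h h' assume "h \<in> K4_V" "h' \<in> K4_V" "K4_E h h'"
    then show "\<exists>x\<in>{f h}. \<exists>y\<in>{f h'}. E x y" using f(3) by auto
  qed
qed

end
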